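(* Let $k \ge 0$ be an integer. Let $A, B, C, D$ be pairwise disjoint piles of coins, each of size $2^k$, containing exactly two counterfeit coins in total, and suppose it is known that either (one coin of $A$ and one coin of $B$ are counterfeit) or (one coin of $C$ and one coin of $D$ are counterfeit). Then there is an adaptive strategy using at most $k+1$ weighings on a 5-way scale that determines both counterfeit coins.
   Context: Coins look identical; all genuine coins have one common weight, all counterfeit coins have one common weight strictly less than the genuine weight. A weighing places two disjoint sets of coins of equal cardinality on the left and right pans. Let $d$ = (number of counterfeit coins on the left pan) $-$ (number of counterfeit coins on the right pan). A 5-way scale reports MUCH LESS if $d \ge 2$, LESS if $d = 1$, EQUAL if $d = 0$, MORE if $d = -1$, MUCH MORE if $d \le -2$. A strategy chooses each weighing possibly depending on previous outcomes; it determines the counterfeit coins if the sequence of outcomes uniquely identifies them. *)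

theory Defs
  imports Main
begin

datatype outcome = MuchLess | Less | Equal | More | MuchMore

definition weigh :: "'a set \<Rightarrow> 'a set \<Rightarrow> 'a set \<Rightarrow> outcome" where
  "weigh L R F = (let d = int (card (F \<inter> L)) - int (card (F \<inter> R)) in
     if d \<ge> 2 then MuchLess else if d = 1 then Less else if d = 0 then Equal
     else if d = -1 then More else MuchMore)"

datatype 'a strategy = Stop | Weigh "'a set" "'a set" "outcome \<Rightarrow> 'a strategy"

primrec run :: "'a strategy \<Rightarrow> 'a set \<Rightarrow> outcome list" where
  "run Stop = (\<lambda>F. [])"
| "run (Weigh L R next) = (\<lambda>F. weigh L R F # run (next (weigh L R F)) F)"

primrec depth :: "'a strategy \<Rightarrow> nat" where
  "depth Stop = 0"
| "depth (Weigh L R next) = Suc (Max (range (\<lambda>r. depth (next r))))"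

primrec valid :: "'a set \<Rightarrow> 'a strategy \<Rightarrow> bool" where
  "valid U Stop = True"
| "valid U (Weigh L R next) =
     (L \<subseteq> U \<and> R \<subseteq> U \<and> finite L \<and> finite R \<and> L \<inter> R = {} \<and> card L = card R
      \<and> (\<forall>r. valid U (next r)))"

definition determines :: "'a strategy \<Rightarrow> 'a set set \<Rightarrow> bool" where
  "determines T S = inj_on (run T) S"

end

theory Submission
  imports Defs
begin

definition pairs :: "'a set \<Rightarrow> 'a set \<Rightarrow> 'a set set" where
  "pairs X Y = {{x, y} | x y. x \<in> X \<and> y \<in> Y}"

lemma pairsI: "x \<in> X \<Longrightarrow> y \<in> Y \<Longrightarrow> {x, y} \<in> pairs X Y"
  unfolding pairs_def by blast

lemma disj_sub: "X \<subseteq> A \<Longrightarrow> Y \<subseteq> B \<Longrightarrow> A \<inter> B = {} \<Longrightarrow> X \<inter> Y = {}"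
  by blast

lemma notin_sub: "x \<in> A \<Longrightarrow> Y \<subseteq> B \<Longrightarrow> A \<inter> B = {} \<Longrightarrow> x \<notin> Y"
  by blast

lemma notin_sub': "x \<in> A \<Longrightarrow> Y \<subseteq> B \<Longrightarrow> B \<inter> A = {} \<Longrightarrow> x \<notin> Y"
  by blast

lemma UNIV_outcome: "(UNIV :: outcome set) = {MuchLess, Less, Equal, More, MuchMore}"
  by (auto intro: outcome.exhaust)

lemma depth_Weigh_le:
  assumes "\<And>r. depth (f r) \<le> n"
  shows "depth (Weigh L R f) \<le> Suc n"
proof -
  have "finite (range (\<lambda>r. depth (f r)))"
    by (simp add: UNIV_outcome)
  then have "Max (range (\<lambda>r. depth (f r))) \<le> n"
    using assms by (subst Max_le_iff) auto
  then show ?thesis by simp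
qed

lemma valid_mono: "valid U T \<Longrightarrow> U \<subseteq> V \<Longrightarrow> valid V T"
  by (induction T) auto

lemma det_step:
  assumes "\<And>F. F \<in> S \<Longrightarrow> F \<in> S' (weigh L R F)"
    and "\<And>r. inj_on (run (f r)) (S' r)"
  shows "inj_on (run (Weigh L R f)) S"
proof (rule inj_onI)
  fix F G assume F: "F \<in> S" and G: "G \<in> S" and eq: "run (Weigh L R f) F = run (Weigh L R f) G"
  then have w: "weigh L R F = weigh L R G" and r: "run (f (weigh L R F)) F = run (f (weigh L R F)) G"
    by auto
  have "F \<in> S' (weigh L R F)" using assms(1) F by blast
  moreover have "G \<in> S' (weigh L R F)" using assms(1)[OF G] w by simp
  ultimately show "F = G" using assms(2) r by (meson inj_onD)
qed

lemma card_pair_Int: "a \<noteq> b \<Longrightarrow> card ({a, b} \<inter> X) = (if a \<in> X then 1 else 0) + (if b \<in> X then 1 else 0)"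
  by (cases "a \<in> X"; cases "b \<in> X") (auto simp: Int_insert_left)

lemma weigh_pair:
  assumes "a \<noteq> b"
  shows "weigh L R {a, b} =
    (let d = (int (if a \<in> L then 1 else 0) + int (if b \<in> L then 1 else 0))
           - (int (if a \<in> R then 1 else 0) + int (if b \<in> R then 1 else 0)) in
     if d \<ge> 2 then MuchLess else if d = 1 then Less else if d = 0 then Equal
     else if d = -1 then More else MuchMore)"
  unfolding weigh_def using assms by (simp add: card_pair_Int)

lemma split_half:
  assumes "finite A" "card A = 2 ^ Suc n"
  obtains A1 where "A1 \<subseteq> A" "card A1 = 2 ^ n" "card (A - A1) = 2 ^ n" "finite A1"
proof -
  obtain A1 where "A1 \<subseteq> A" "card A1 = 2 ^ n"
    using obtain_subset_with_card_n[of "2^n" A] assms by auto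
  moreover have "card (A - A1) = 2 ^ n"
    using calculation assms by (simp add: card_Diff_subset finite_subset)
  ultimately show ?thesis using that assms finite_subset by blast
qed

lemma main:
  assumes "finite A" "finite B" "finite C" "finite D"
    and "card A = 2 ^ k" "card B = 2 ^ k" "card C = 2 ^ k" "card D = 2 ^ k"
    and "A \<inter> B = {}" "A \<inter> C = {}" "A \<inter> D = {}"
    and "B \<inter> C = {}" "B \<inter> D = {}" "C \<inter> D = {}"
  shows "\<exists>T. valid (A \<union> B \<union> C \<union> D) T \<and> depth T \<le> k + 1 \<and>
           inj_on (run T) (pairs A B \<union> pairs C D)"
  using assms
proof (induction k arbitrary: A B C D)
  case 0
  then obtain a b c d where A: "A = {a}" and B: "B = {b}" and C: "C = {c}" and D: "D = {d}"
    by (auto simp: card_Suc_eq)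
  have ne: "a \<noteq> b" "a \<noteq> c" "a \<noteq> d" "b \<noteq> c" "b \<noteq> d" "c \<noteq> d"
    using 0 A B C D by auto
  define T where "T = Weigh A C (\<lambda>_. Stop)"
  have "valid (A \<union> B \<union> C \<union> D) T" using 0 A C by (auto simp: T_def)
  moreover have "depth T \<le> 0 + 1" by (simp add: T_def UNIV_outcome)
  moreover have "inj_on (run T) (pairs A B \<union> pairs C D)"
  proof -
    have "pairs A B \<union> pairs C D = {{a, b}, {c, d}}" by (auto simp: pairs_def A B C D)
    moreover have "run T {a, b} \<noteq> run T {c, d}"
      using ne by (simp add: T_def A C weigh_pair)
    ultimately show ?thesis by (auto simp: inj_on_def)
  qed
  ultimately show ?case by blast
next
  case (Suc n)
  obtain A1 where A1: "A1 \<subseteq> A" "card A1 = 2 ^ n" "card (A - A1) = 2 ^ n" "finite A1"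
    using split_half Suc.prems by metis
  obtain B1 where B1: "B1 \<subseteq> B" "card B1 = 2 ^ n" "card (B - B1) = 2 ^ n" "finite B1"
    using split_half Suc.prems by metis
  obtain C1 where C1: "C1 \<subseteq> C" "card C1 = 2 ^ n" "card (C - C1) = 2 ^ n" "finite C1"
    using split_half Suc.prems by metis
  obtain D1 where D1: "D1 \<subseteq> D" "card D1 = 2 ^ n" "card (D - D1) = 2 ^ n" "finite D1"
    using split_half Suc.prems by metis
  define A2 where "A2 = A - A1"
  define B2 where "B2 = B - B1"
  define C2 where "C2 = C - C1"
  define D2 where "D2 = D - D1"
  have fin: "finite A2" "finite B2" "finite C2" "finite D2"
    using Suc.prems by (auto simp: A2_def B2_def C2_def D2_def)
  note cards = A1(2) B1(2) C1(2) D1(2) A1(3)[folded A2_def] B1(3)[folded B2_def]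
    C1(3)[folded C2_def] D1(3)[folded D2_def]
  note disj = Suc.prems(9-14)
  have sA2: "A2 \<subseteq> A" "B2 \<subseteq> B" "C2 \<subseteq> C" "D2 \<subseteq> D" unfolding A2_def B2_def C2_def D2_def by auto
  note sB2 = sA2(2) and sC2 = sA2(3) and sD2 = sA2(4) and sA2 = sA2(1)
  have dj0: "A1 \<inter> A2 = {}" unfolding A2_def by blast
  have dj1: "B1 \<inter> B2 = {}" unfolding B2_def by blast
  have dj2: "C1 \<inter> C2 = {}" unfolding C2_def by blast
  have dj3: "D1 \<inter> D2 = {}" unfolding D2_def by blast
  have dj4: "A1 \<inter> B1 = {}" by (rule disj_sub[OF A1(1) B1(1) disj(1)])
  have dj5: "A1 \<inter> B2 = {}" by (rule disj_sub[OF A1(1) sB2 disj(1)])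
  have dj6: "A1 \<inter> C1 = {}" by (rule disj_sub[OF A1(1) C1(1) disj(2)])
  have dj7: "A1 \<inter> C2 = {}" by (rule disj_sub[OF A1(1) sC2 disj(2)])
  have dj8: "A1 \<inter> D1 = {}" by (rule disj_sub[OF A1(1) D1(1) disj(3)])
  have dj9: "A1 \<inter> D2 = {}" by (rule disj_sub[OF A1(1) sD2 disj(3)])
  have dj10: "A2 \<inter> B1 = {}" by (rule disj_sub[OF sA2 B1(1) disj(1)])
  have dj11: "A2 \<inter> B2 = {}" by (rule disj_sub[OF sA2 sB2 disj(1)])
  have dj12: "A2 \<inter> C1 = {}" by (rule disj_sub[OF sA2 C1(1) disj(2)])
  have dj13: "A2 \<inter> C2 = {}" by (rule disj_sub[OF sA2 sC2 disj(2)])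
  have dj14: "A2 \<inter> D1 = {}" by (rule disj_sub[OF sA2 D1(1) disj(3)])
  have dj15: "A2 \<inter> D2 = {}" by (rule disj_sub[OF sA2 sD2 disj(3)])
  have dj16: "B1 \<inter> C1 = {}" by (rule disj_sub[OF B1(1) C1(1) disj(4)])
  have dj17: "B1 \<inter> C2 = {}" by (rule disj_sub[OF B1(1) sC2 disj(4)])
  have dj18: "B1 \<inter> D1 = {}" by (rule disj_sub[OF B1(1) D1(1) disj(5)])
  have dj19: "B1 \<inter> D2 = {}" by (rule disj_sub[OF B1(1) sD2 disj(5)])
  have dj20: "B2 \<inter> C1 = {}" by (rule disj_sub[OF sB2 C1(1) disj(4)])
  have dj21: "B2 \<inter> C2 = {}" by (rule disj_sub[OF sB2 sC2 disj(4)])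
  have dj22: "B2 \<inter> D1 = {}" by (rule disj_sub[OF sB2 D1(1) disj(5)])
  have dj23: "B2 \<inter> D2 = {}" by (rule disj_sub[OF sB2 sD2 disj(5)])
  have dj24: "C1 \<inter> D1 = {}" by (rule disj_sub[OF C1(1) D1(1) disj(6)])
  have dj25: "C1 \<inter> D2 = {}" by (rule disj_sub[OF C1(1) sD2 disj(6)])
  have dj26: "C2 \<inter> D1 = {}" by (rule disj_sub[OF sC2 D1(1) disj(6)])
  have dj27: "C2 \<inter> D2 = {}" by (rule disj_sub[OF sC2 sD2 disj(6)])
  note dj = dj0 dj1 dj2 dj3 dj4 dj5 dj6 dj7 dj8 dj9 dj10 dj11 dj12 dj13 dj14 dj15 dj16 dj17 dj18 dj19 dj20 dj21 dj22 dj23 dj24 dj25 dj26 dj27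
  note djc = dj[THEN trans[OF Int_commute]]
  have un: "A = A1 \<union> A2" "B = B1 \<union> B2" "C = C1 \<union> C2" "D = D1 \<union> D2"
    using A1(1) B1(1) C1(1) D1(1) unfolding A2_def B2_def C2_def D2_def by auto
  have "\<exists>T. valid (A1 \<union> B1 \<union> A2 \<union> B2) T \<and> depth T \<le> n + 1 \<and> inj_on (run T) (pairs A1 B1 \<union> pairs A2 B2)"
    by (rule Suc.IH) (use fin cards dj djc A1(4) B1(4) in \<open>simp_all only: simp_thms\<close>)
  then obtain T1 where T1: "valid (A1 \<union> B1 \<union> A2 \<union> B2) T1" "depth T1 \<le> n + 1" "inj_on (run T1) (pairs A1 B1 \<union> pairs A2 B2)"
    by blast
  have "\<exists>T. valid (A1 \<union> B2 \<union> A2 \<union> B1) T \<and> depth T \<le> n + 1 \<and> inj_on (run T) (pairs A1 B2 \<union> pairs A2 B1)"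
    by (rule Suc.IH) (use fin cards dj djc A1(4) B1(4) in \<open>simp_all only: simp_thms\<close>)
  then obtain T2 where T2: "valid (A1 \<union> B2 \<union> A2 \<union> B1) T2" "depth T2 \<le> n + 1" "inj_on (run T2) (pairs A1 B2 \<union> pairs A2 B1)"
    by blast
  have "\<exists>T. valid (A2 \<union> B2 \<union> C1 \<union> D1) T \<and> depth T \<le> n + 1 \<and> inj_on (run T) (pairs A2 B2 \<union> pairs C1 D1)"
    by (rule Suc.IH) (use fin cards dj djc C1(4) D1(4) in \<open>simp_all only: simp_thms\<close>)
  then obtain T3 where T3: "valid (A2 \<union> B2 \<union> C1 \<union> D1) T3" "depth T3 \<le> n + 1" "inj_on (run T3) (pairs A2 B2 \<union> pairs C1 D1)"
    by blast
  have "\<exists>T. valid (C1 \<union> D2 \<union> C2 \<union> D1) T \<and> depth T \<le> n + 1 \<and> inj_on (run T) (pairs C1 D2 \<union> pairs C2 D1)"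
    by (rule Suc.IH) (use fin cards dj djc C1(4) D1(4) in \<open>simp_all only: simp_thms\<close>)
  then obtain T4 where T4: "valid (C1 \<union> D2 \<union> C2 \<union> D1) T4" "depth T4 \<le> n + 1" "inj_on (run T4) (pairs C1 D2 \<union> pairs C2 D1)"
    by blast
  have "\<exists>T. valid (C2 \<union> D2 \<union> C1 \<union> D1) T \<and> depth T \<le> n + 1 \<and> inj_on (run T) (pairs C2 D2 \<union> pairs C1 D1)"
    by (rule Suc.IH) (use fin cards dj djc C1(4) D1(4) in \<open>simp_all only: simp_thms\<close>)
  then obtain T5 where T5: "valid (C2 \<union> D2 \<union> C1 \<union> D1) T5" "depth T5 \<le> n + 1" "inj_on (run T5) (pairs C2 D2 \<union> pairs C1 D1)"
    by blast
  define L where "L = A1 \<union> B1"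
  define R where "R = C2 \<union> D2"
  define f where "f = (\<lambda>r. case r of MuchLess \<Rightarrow> T1 | Less \<Rightarrow> T2 | Equal \<Rightarrow> T3 | More \<Rightarrow> T4 | MuchMore \<Rightarrow> T5)"
  define S' where "S' = (\<lambda>r. case r of MuchLess \<Rightarrow> pairs A1 B1 \<union> pairs A2 B2
     | Less \<Rightarrow> pairs A1 B2 \<union> pairs A2 B1 | Equal \<Rightarrow> pairs A2 B2 \<union> pairs C1 D1
     | More \<Rightarrow> pairs C1 D2 \<union> pairs C2 D1 | MuchMore \<Rightarrow> pairs C2 D2 \<union> pairs C1 D1)"
  define T where "T = Weigh L R f"
  let ?U = "A \<union> B \<union> C \<union> D"
  have cL: "card L = 2 ^ n + 2 ^ n" unfolding L_def
    using card_Un_disjoint[OF A1(4) B1(4) dj(5)] cards by simp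
  have cR: "card R = 2 ^ n + 2 ^ n" unfolding R_def
    using card_Un_disjoint[OF fin(3) fin(4) dj(28)] cards by simp
  have "L \<subseteq> ?U" "R \<subseteq> ?U" "finite L" "finite R" "L \<inter> R = {}"
    unfolding L_def R_def using un fin A1(4) B1(4) dj by auto
  moreover have "\<forall>r. valid ?U (f r)"
  proof
    fix r show "valid ?U (f r)"
      by (cases r) (auto simp: f_def un intro: valid_mono[OF T1(1)] valid_mono[OF T2(1)]
          valid_mono[OF T3(1)] valid_mono[OF T4(1)] valid_mono[OF T5(1)])
  qed
  ultimately have V: "valid ?U T" using cL cR by (simp add: T_def)
  have Dp: "depth T \<le> Suc (n + 1)" unfolding T_def
    using T1(2) T2(2) T3(2) T4(2) T5(2) by (intro depth_Weigh_le) (simp add: f_def split: outcome.split)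
  have I: "inj_on (run T) (pairs A B \<union> pairs C D)" unfolding T_def
  proof (rule det_step[where S'=S'])
    fix r show "inj_on (run (f r)) (S' r)"
      by (cases r) (simp_all add: f_def S'_def T1(3) T2(3) T3(3) T4(3) T5(3))
  next
    fix F assume "F \<in> pairs A B \<union> pairs C D"
    then show "F \<in> S' (weigh L R F)"
    proof
      assume "F \<in> pairs A B"
      then obtain a b where F: "F = {a, b}" "a \<in> A" "b \<in> B" by (auto simp: pairs_def)
      have nab: "a \<noteq> b" using F(2,3) disj by blast
      have ab: "a \<in> A1 \<or> a \<in> A2" "b \<in> B1 \<or> b \<in> B2" using F(2,3) unfolding A2_def B2_def by blast+
      have nots: "a \<notin> C2" "a \<notin> D2" "b \<notin> C2" "b \<notin> D2" "a \<notin> B1" "b \<notin> A1"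
        using notin_sub[OF F(2) sC2 disj(2)] notin_sub[OF F(2) sD2 disj(3)]
          notin_sub[OF F(3) sC2 disj(4)] notin_sub[OF F(3) sD2 disj(5)]
          notin_sub[OF F(2) B1(1) disj(1)] notin_sub'[OF F(3) A1(1) disj(1)] by auto
      from ab show ?thesis
        by (elim disjE) (simp_all add: F weigh_pair L_def R_def S'_def pairsI nab nots A2_def B2_def)
    next
      assume "F \<in> pairs C D"
      then obtain c d where F: "F = {c, d}" "c \<in> C" "d \<in> D" by (auto simp: pairs_def)
      have ncd: "c \<noteq> d" using F(2,3) disj by blast
      have cd: "c \<in> C1 \<or> c \<in> C2" "d \<in> D1 \<or> d \<in> D2" using F(2,3) unfolding C2_def D2_def by blast+
      have nots: "c \<notin> A1" "c \<notin> B1" "d \<notin> A1" "d \<notin> B1" "c \<notin> D2" "d \<notin> C2"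
        using notin_sub'[OF F(2) A1(1) disj(2)] notin_sub'[OF F(2) B1(1) disj(4)]
          notin_sub'[OF F(3) A1(1) disj(3)] notin_sub'[OF F(3) B1(1) disj(5)]
          notin_sub[OF F(2) sD2 disj(6)] notin_sub'[OF F(3) sC2 disj(6)] by auto
      note nots = nots notin_sub[OF F(2) subset_refl disj(6)] notin_sub'[OF F(3) subset_refl disj(6)] F(2,3)
      from cd show ?thesis
        by (elim disjE) (simp_all add: F weigh_pair L_def R_def S'_def pairsI ncd nots C2_def D2_def)
    qed
  qed
  show ?case using V Dp I by auto
qed

theorem mainTheorem6:
  fixes k :: nat and A B C D :: "'a set"
  assumes "finite A" "finite B" "finite C" "finite D"
    and "card A = 2 ^ k" "card B = 2 ^ k" "card C = 2 ^ k" "card D = 2 ^ k"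
    and "A \<inter> B = {}" "A \<inter> C = {}" "A \<inter> D = {}"
    and "B \<inter> C = {}" "B \<inter> D = {}" "C \<inter> D = {}"
  shows "\<exists>T. valid (A \<union> B \<union> C \<union> D) T \<and> depth T \<le> k + 1 \<and>
           determines T ({{a, b} | a b. a \<in> A \<and> b \<in> B} \<union> {{c, d} | c d. c \<in> C \<and> d \<in> D})"
  using main[OF assms] unfolding determines_def pairs_def .

end
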